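(* Let $G$ be a finite, simple, connected graph and $k\ge 0$. If $G$ contains a $k$-supported cycle, then $W(G)\ge k-4$.
   Context: For a vertex $r$ of $G$ (the root) and $x\in V(G)$, let $\ell_r(x)=d_G(r,x)$. For an integer $n\ge 0$, let $R_r(n)$ be the set of edges $xy\in E(G)$ with $\max\{\ell_r(x),\ell_r(y)\}>n$, and write $x\simeq_n y$ if $x$ and $y$ lie in the same connected component of $(V(G),R_r(n))$ (in particular $x\simeq_n x$). Define $W(r)=\max_{n\ge 0}\max\{d_G(x,y): \ell_r(x)=\ell_r(y)=n,\ x\simeq_n y\}$ and $W(G)=\max_{r\in V(G)}W(r)$. A cycle $C$ in $G$ is $k$-supported if it can be partitioned into three edge-disjoint paths $I_1,I_2,I_3$, with $I_1\cap I_2$, $I_2\cap I_3$, $I_3\cap I_1$ each a single vertex, such that for all $u_i\in V(I_i)$ ($i=1,2,3$), $\max_{i,j} d_G(u_i,u_j)\ge k$. *)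

theory Defs
  imports Main
begin

definition simple_graph :: "'a set \<Rightarrow> 'a set set \<Rightarrow> bool" where
  "simple_graph V E \<longleftrightarrow> finite V \<and> (\<forall>e\<in>E. \<exists>x y. x \<in> V \<and> y \<in> V \<and> x \<noteq> y \<and> e = {x, y})"

definition walk :: "'a set \<Rightarrow> 'a set set \<Rightarrow> 'a list \<Rightarrow> bool" where
  "walk V F xs \<longleftrightarrow> xs \<noteq> [] \<and> set xs \<subseteq> V \<and>
     (\<forall>i. Suc i < length xs \<longrightarrow> {xs ! i, xs ! Suc i} \<in> F)"

definition connected_in :: "'a set \<Rightarrow> 'a set set \<Rightarrow> 'a \<Rightarrow> 'a \<Rightarrow> bool" where
  "connected_in V F x y \<longleftrightarrow> (\<exists>xs. walk V F xs \<and> hd xs = x \<and> last xs = y)"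

definition connected_graph :: "'a set \<Rightarrow> 'a set set \<Rightarrow> bool" where
  "connected_graph V E \<longleftrightarrow> V \<noteq> {} \<and> (\<forall>x\<in>V. \<forall>y\<in>V. connected_in V E x y)"

definition gdist :: "'a set \<Rightarrow> 'a set set \<Rightarrow> 'a \<Rightarrow> 'a \<Rightarrow> nat" where
  "gdist V E x y = (LEAST n. \<exists>xs. walk V E xs \<and> hd xs = x \<and> last xs = y \<and> length xs = Suc n)"

definition Redges :: "'a set \<Rightarrow> 'a set set \<Rightarrow> 'a \<Rightarrow> nat \<Rightarrow> 'a set set" where
  "Redges V E r n = {e \<in> E. \<exists>v\<in>e. gdist V E r v > n}"

definition simeq :: "'a set \<Rightarrow> 'a set set \<Rightarrow> 'a \<Rightarrow> nat \<Rightarrow> 'a \<Rightarrow> 'a \<Rightarrow> bool" where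
  "simeq V E r n x y \<longleftrightarrow> connected_in V (Redges V E r n) x y"

definition Wroot :: "'a set \<Rightarrow> 'a set set \<Rightarrow> 'a \<Rightarrow> nat" where
  "Wroot V E r = Max {gdist V E x y | x y n. x \<in> V \<and> y \<in> V \<and>
       gdist V E r x = n \<and> gdist V E r y = n \<and> simeq V E r n x y}"

definition Wgraph :: "'a set \<Rightarrow> 'a set set \<Rightarrow> nat" where
  "Wgraph V E = Max (Wroot V E ` V)"

definition is_cycle :: "'a set \<Rightarrow> 'a set set \<Rightarrow> 'a list \<Rightarrow> bool" where
  "is_cycle V E cs \<longleftrightarrow> length cs \<ge> 3 \<and> distinct cs \<and> set cs \<subseteq> V \<and>
     (\<forall>i < length cs. {cs ! i, cs ! ((Suc i) mod length cs)} \<in> E)"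

text \<open>A partition of the cycle into three edge-disjoint paths pairwise meeting
in a single vertex is determined by three cut positions a < b < c: the paths
are the arcs c_a..c_b, c_b..c_c, and c_c..c_{m-1},c_0..c_a.\<close>
definition k_supported :: "'a set \<Rightarrow> 'a set set \<Rightarrow> nat \<Rightarrow> 'a list \<Rightarrow> bool" where
  "k_supported V E k cs \<longleftrightarrow> is_cycle V E cs \<and>
     (\<exists>a b c. a < b \<and> b < c \<and> c < length cs \<and>
       (let I1 = {cs ! i | i. a \<le> i \<and> i \<le> b};
            I2 = {cs ! i | i. b \<le> i \<and> i \<le> c};
            I3 = {cs ! i | i. c \<le> i \<and> i < length cs} \<union> {cs ! i | i. i \<le> a}
        in \<forall>u1\<in>I1. \<forall>u2\<in>I2. \<forall>u3\<in>I3.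
             gdist V E u1 u2 \<ge> k \<or> gdist V E u2 u3 \<ge> k \<or> gdist V E u1 u3 \<ge> k))"

end

theory Submission
  imports Defs
begin

lemma walk_single: "walk V F [x] \<longleftrightarrow> x \<in> V"
  by (auto simp: walk_def)

lemma walk_Cons2: "walk V F (x # y # xs) \<longleftrightarrow> x \<in> V \<and> {x,y} \<in> F \<and> walk V F (y # xs)"
proof
  assume w: "walk V F (x # y # xs)"
  have all: "\<forall>i. Suc i < length (x # y # xs) \<longrightarrow> {(x # y # xs) ! i, (x # y # xs) ! Suc i} \<in> F"
    using w unfolding walk_def by (rule conjunct2[THEN conjunct2])
  have sv: "set (x # y # xs) \<subseteq> V"
    using w unfolding walk_def by (rule conjunct2[THEN conjunct1])
  have "{x,y} \<in> F" using all[rule_format, of 0] by simp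
  moreover have "walk V F (y # xs)" unfolding walk_def
  proof (intro conjI allI impI)
    fix i assume "Suc i < length (y # xs)"
    then show "{(y # xs) ! i, (y # xs) ! Suc i} \<in> F" using all[rule_format, of "Suc i"] by simp
  qed (use sv in simp_all)
  ultimately show "x \<in> V \<and> {x,y} \<in> F \<and> walk V F (y # xs)" using sv by simp
next
  assume h: "x \<in> V \<and> {x,y} \<in> F \<and> walk V F (y # xs)"
  then have w: "walk V F (y # xs)" by blast
  have all: "\<forall>i. Suc i < length (y # xs) \<longrightarrow> {(y # xs) ! i, (y # xs) ! Suc i} \<in> F"
    using w unfolding walk_def by (rule conjunct2[THEN conjunct2])
  have sv: "set (y # xs) \<subseteq> V"
    using w unfolding walk_def by (rule conjunct2[THEN conjunct1])
  show "walk V F (x # y # xs)" unfolding walk_def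
  proof (intro conjI allI impI)
    fix i assume i: "Suc i < length (x # y # xs)"
    show "{(x # y # xs) ! i, (x # y # xs) ! Suc i} \<in> F"
    proof (cases i)
      case 0 then show ?thesis using h by simp
    next
      case (Suc j)
      then have "Suc j < length (y # xs)" using i by simp
      then show ?thesis using all[rule_format, of j] Suc by simp
    qed
  qed (use h sv in simp_all)
qed

lemma walk_append: "walk V F xs \<Longrightarrow> walk V F ys \<Longrightarrow> last xs = hd ys \<Longrightarrow> walk V F (xs @ tl ys)"
proof (induction xs rule: induct_list012)
  case 1 then show ?case by (simp add: walk_def)
next
  case (2 x) then show ?case by (cases ys) auto
next
  case (3 x y zs)
  then have "walk V F ((y # zs) @ tl ys)" by (simp add: walk_Cons2)
  then show ?case using 3 by (simp add: walk_Cons2)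
qed

lemma walk_rev: "walk V F xs \<Longrightarrow> walk V F (rev xs)"
  unfolding walk_def
proof (intro conjI allI impI)
  fix i assume w: "xs \<noteq> [] \<and> set xs \<subseteq> V \<and> (\<forall>i. Suc i < length xs \<longrightarrow> {xs ! i, xs ! Suc i} \<in> F)"
    and i: "Suc i < length (rev xs)"
  define j where "j = length xs - Suc (Suc i)"
  have "Suc j < length xs" using i by (simp add: j_def)
  then have "{xs ! j, xs ! Suc j} \<in> F" using w by blast
  moreover have "rev xs ! i = xs ! Suc j" "rev xs ! Suc i = xs ! j" using i
    by (auto simp: rev_nth j_def Suc_diff_Suc)
  ultimately show "{rev xs ! i, rev xs ! Suc i} \<in> F" by (simp add: insert_commute)
qed auto

lemma conn_sym: "connected_in V F x y \<Longrightarrow> connected_in V F y x"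
  unfolding connected_in_def
  by (metis walk_rev hd_rev last_rev)

lemma conn_trans: "connected_in V F x y \<Longrightarrow> connected_in V F y z \<Longrightarrow> connected_in V F x z"
  unfolding connected_in_def
proof (elim exE conjE)
  fix xs ys assume a: "walk V F xs" "hd xs = x" "last xs = y" "walk V F ys" "hd ys = y" "last ys = z"
  have w: "walk V F (xs @ tl ys)" using a walk_append by metis
  have ne: "xs \<noteq> []" "ys \<noteq> []" using a by (auto simp: walk_def)
  have "hd (xs @ tl ys) = x" using a ne by simp
  moreover have "last (xs @ tl ys) = z"
  proof (cases "tl ys = []")
    case True then have "ys = [hd ys]" using ne by (cases ys) auto
    then show ?thesis using a True by (metis append_Nil2 last.simps)
  next
    case False then show ?thesis using a ne by (metis last_append last_tl)
  qed
  ultimately show "\<exists>xs. walk V F xs \<and> hd xs = x \<and> last xs = z" using w by blast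
qed


lemma gdist_witness:
  assumes "connected_graph V E" "x \<in> V" "y \<in> V"
  shows "\<exists>xs. walk V E xs \<and> hd xs = x \<and> last xs = y \<and> length xs = Suc (gdist V E x y)"
proof -
  obtain xs where xs: "walk V E xs" "hd xs = x" "last xs = y"
    using assms unfolding connected_graph_def connected_in_def by blast
  then have "length xs = Suc (length xs - 1)" by (cases xs) (auto simp: walk_def)
  then have "\<exists>n xs. walk V E xs \<and> hd xs = x \<and> last xs = y \<and> length xs = Suc n" using xs by blast
  then show ?thesis unfolding gdist_def by (rule LeastI_ex)
qed

lemma gdist_le:
  assumes "walk V E xs" "hd xs = x" "last xs = y"
  shows "gdist V E x y \<le> length xs - 1"
proof -
  have "length xs = Suc (length xs - 1)" using assms by (cases xs) (auto simp: walk_def)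
  then show ?thesis unfolding gdist_def using assms by (intro Least_le) blast
qed

lemma gdist_tri:
  assumes "connected_graph V E" "x \<in> V" "y \<in> V" "z \<in> V"
  shows "gdist V E x z \<le> gdist V E x y + gdist V E y z"
proof -
  obtain xs where xs: "walk V E xs" "hd xs = x" "last xs = y" "length xs = Suc (gdist V E x y)"
    using gdist_witness assms by metis
  obtain ys where ys: "walk V E ys" "hd ys = y" "last ys = z" "length ys = Suc (gdist V E y z)"
    using gdist_witness assms by metis
  have "connected_in V E x z" using assms unfolding connected_graph_def by blast
  have w: "walk V E (xs @ tl ys)" using xs ys walk_append by metis
  have h: "hd (xs @ tl ys) = x" using xs by (cases xs) auto
  have l: "last (xs @ tl ys) = z"
  proof (cases "tl ys = []")
    case True then have "ys = [hd ys]" using ys by (cases ys) auto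
    then have "y = z" using ys by (metis last.simps)
    then show ?thesis using xs True by simp
  next
    case False then show ?thesis using ys by (metis last_append last_tl)
  qed
  have "gdist V E x z \<le> length (xs @ tl ys) - 1" using gdist_le[OF w h l] .
  also have "\<dots> = gdist V E x y + gdist V E y z" using xs ys by simp
  finally show ?thesis .
qed

lemma gdist_edge:
  assumes "{u,v} \<in> E" "u \<in> V" "v \<in> V"
  shows "gdist V E u v \<le> 1"
proof -
  have "walk V E [u,v]" using assms by (simp add: walk_Cons2 walk_single)
  from gdist_le[OF this] show ?thesis by simp
qed

lemma gdist_self: "x \<in> V \<Longrightarrow> gdist V E x x = 0"
  using gdist_le[of V E "[x]" x x] by (simp add: walk_single)

lemma gdist_zero:
  assumes "connected_graph V E" "r \<in> V" "v \<in> V" "gdist V E r v = 0"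
  shows "v = r"
  using gdist_witness[OF assms(1-3)] assms(4) by (metis Suc_length_conv last.simps length_0_conv list.sel(1))

lemma level_step:
  assumes "connected_graph V E" "r \<in> V" "{u,v} \<in> E" "u \<in> V" "v \<in> V"
  shows "gdist V E r v \<le> gdist V E r u + 1"
  using gdist_tri[OF assms(1,2,4,5)] gdist_edge[OF assms(3-5)] by linarith

lemma level_pred:
  assumes "connected_graph V E" "r \<in> V" "u \<in> V" "gdist V E r u = Suc n"
  shows "\<exists>z\<in>V. {z,u} \<in> E \<and> gdist V E r z = n"
proof -
  obtain xs where xs: "walk V E xs" "hd xs = r" "last xs = u" "length xs = Suc (Suc n)"
    using gdist_witness assms by metis
  define z where "z = xs ! n"
  have zV: "z \<in> V" using xs unfolding walk_def z_def by (simp add: subset_iff)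
  have ne: "xs \<noteq> []" using xs(4) by auto
  have lu: "xs ! Suc n = u" using xs(3,4) last_conv_nth[OF ne] by simp
  have "Suc n < length xs" using xs(4) by simp
  then have "{xs ! n, xs ! Suc n} \<in> E" using xs(1) unfolding walk_def by blast
  then have e: "{z,u} \<in> E" using lu by (simp add: z_def)
  have wt: "walk V E (take (Suc n) xs)" unfolding walk_def
  proof (intro conjI allI impI)
    show "take (Suc n) xs \<noteq> []" using xs(4) by (cases xs) auto
    have "set xs \<subseteq> V" using xs(1) by (simp add: walk_def)
    then show "set (take (Suc n) xs) \<subseteq> V" by (meson set_take_subset subset_trans)
  next
    fix i assume i: "Suc i < length (take (Suc n) xs)"
    then have "Suc i < length xs" by simp
    then have "{xs ! i, xs ! Suc i} \<in> E" using xs(1) unfolding walk_def by blast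
    then show "{take (Suc n) xs ! i, take (Suc n) xs ! Suc i} \<in> E" using i by simp
  qed
  have "hd (take (Suc n) xs) = r" using xs by (cases xs) auto
  moreover have "last (take (Suc n) xs) = z" using xs(4) unfolding z_def by (subst last_conv_nth) auto
  ultimately have "gdist V E r z \<le> n" using gdist_le[OF wt] xs by simp
  moreover have "Suc n \<le> gdist V E r z + 1" using level_step[OF assms(1,2) e zV assms(3)] assms by simp
  ultimately show ?thesis using zV e by auto
qed


lemma Wroot_ge:
  assumes "simple_graph V E" "x \<in> V" "y \<in> V" "gdist V E r x = n" "gdist V E r y = n"
    "simeq V E r n x y"
  shows "gdist V E x y \<le> Wroot V E r"
proof -
  have "finite V" using assms(1) unfolding simple_graph_def by (rule conjunct1)
  let ?S = "{gdist V E x y | x y n. x \<in> V \<and> y \<in> V \<and>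
       gdist V E r x = n \<and> gdist V E r y = n \<and> simeq V E r n x y}"
  have "?S \<subseteq> (\<lambda>(x,y). gdist V E x y) ` (V \<times> V)"
  proof
    fix d assume "d \<in> ?S"
    then obtain x' y' where "d = gdist V E x' y'" "x' \<in> V" "y' \<in> V" by blast
    then show "d \<in> (\<lambda>(x,y). gdist V E x y) ` (V \<times> V)" by (intro image_eqI[of _ _ "(x',y')"]) auto
  qed
  moreover have "finite ((\<lambda>(x,y). gdist V E x y) ` (V \<times> V))" using \<open>finite V\<close> by simp
  ultimately have "finite ?S" by (rule finite_subset)
  moreover have "gdist V E x y \<in> ?S"
    unfolding mem_Collect_eq
    apply (rule exI[of _ x], rule exI[of _ y], rule exI[of _ n])
    using assms(2-6) by blast
  ultimately show ?thesis unfolding Wroot_def by (rule Max_ge)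
qed

lemma Wgraph_ge:
  assumes "simple_graph V E" "r \<in> V"
  shows "Wroot V E r \<le> Wgraph V E"
proof -
  have "finite V" using assms(1) unfolding simple_graph_def by (rule conjunct1)
  then have "finite (Wroot V E ` V)" by (rule finite_imageI)
  moreover have "Wroot V E r \<in> Wroot V E ` V" using assms(2) by (rule imageI)
  ultimately show ?thesis unfolding Wgraph_def by (rule Max_ge)
qed

lemma ivt_left:
  assumes conn: "connected_graph V E" and rV: "r \<in> V" and gV: "\<forall>i. g i \<in> V"
    and adj: "\<forall>i. {g i, g (Suc i)} \<in> E"
    and pq: "p < q" and lp: "gdist V E r (g p) \<le> n" and lq: "gdist V E r (g q) > n"
  shows "\<exists>i. p \<le> i \<and> i < q \<and> gdist V E r (g i) = n \<and> connected_in V (Redges V E r n) (g i) (g q)"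
proof -
  define S where "S = {i. p \<le> i \<and> i < q \<and> gdist V E r (g i) \<le> n}"
  have fS: "finite S" unfolding S_def by (rule finite_subset[of _ "{..<q}"]) auto
  have "p \<in> S" using pq lp by (simp add: S_def)
  define i where "i = Max S"
  have iS: "i \<in> S" unfolding i_def using fS \<open>p \<in> S\<close> by (intro Max_in) auto
  have above: "gdist V E r (g j) > n" if "i < j" "j \<le> q" for j
  proof (cases "j = q")
    case True then show ?thesis using lq by simp
  next
    case False
    have "j \<notin> S" using that fS i_def Max_ge leD by blast
    then show ?thesis using False that iS by (auto simp: S_def)
  qed
  have "gdist V E r (g (Suc i)) \<le> gdist V E r (g i) + 1"
    using level_step[OF conn rV adj[rule_format, of i]] gV by blast
  moreover have "gdist V E r (g (Suc i)) > n" using above iS by (auto simp: S_def)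
  ultimately have lev: "gdist V E r (g i) = n" using iS by (auto simp: S_def)
  define xs where "xs = map g [i..<Suc q]"
  have iq: "i < q" using iS by (simp add: S_def)
  have len: "length xs = Suc q - i" using iq by (simp add: xs_def)
  have nth: "xs ! t = g (i + t)" if "t < Suc q - i" for t using that by (simp add: xs_def del: upt_Suc)
  have "walk V (Redges V E r n) xs" unfolding walk_def
  proof (intro conjI allI impI)
    show "xs \<noteq> []" using iq by (simp add: xs_def)
    show "set xs \<subseteq> V" using gV by (auto simp: xs_def)
  next
    fix t assume t: "Suc t < length xs"
    have e: "{g (i+t), g (Suc (i+t))} \<in> E" using adj by blast
    have "gdist V E r (g (Suc (i+t))) > n" using t len by (intro above) auto
    then show "{xs ! t, xs ! Suc t} \<in> Redges V E r n" using e t len nth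
      by (auto simp: Redges_def)
  qed
  moreover have "hd xs = g i" using iq by (simp add: xs_def upt_rec)
  moreover have "last xs = g q" using iq by (simp add: xs_def)
  ultimately show ?thesis using lev iq iS unfolding connected_in_def S_def by blast
qed

lemma ivt_right:
  assumes conn: "connected_graph V E" and rV: "r \<in> V" and gV: "\<forall>i. g i \<in> V"
    and adj: "\<forall>i. {g i, g (Suc i)} \<in> E"
    and pq: "p < q" and lp: "gdist V E r (g p) > n" and lq: "gdist V E r (g q) \<le> n"
  shows "\<exists>i. p < i \<and> i \<le> q \<and> gdist V E r (g i) = n \<and> connected_in V (Redges V E r n) (g p) (g i)"
proof -
  define S where "S = {i. p < i \<and> i \<le> q \<and> gdist V E r (g i) \<le> n}"
  have fS: "finite S" unfolding S_def by (rule finite_subset[of _ "{..q}"]) auto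
  have "q \<in> S" using pq lq by (simp add: S_def)
  define i where "i = Min S"
  have iS: "i \<in> S" unfolding i_def using fS \<open>q \<in> S\<close> by (intro Min_in) auto
  have below: "gdist V E r (g j) > n" if "p \<le> j" "j < i" for j
  proof (cases "j = p")
    case True then show ?thesis using lp by simp
  next
    case False
    have "j \<notin> S" using that fS i_def Min_le leD by blast
    then show ?thesis using False that iS by (auto simp: S_def)
  qed
  obtain i' where i': "i = Suc i'" using iS by (cases i) (auto simp: S_def)
  have e': "{g (Suc i'), g i'} \<in> E" using adj[rule_format, of i'] by (simp add: insert_commute)
  have "gdist V E r (g i') \<le> gdist V E r (g (Suc i')) + 1"
    using level_step[OF conn rV e' gV[rule_format] gV[rule_format]] .
  moreover have "gdist V E r (g i') > n" using below iS i' by (auto simp: S_def)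
  ultimately have lev: "gdist V E r (g i) = n" using iS i' by (auto simp: S_def)
  define xs where "xs = map g [p..<Suc i]"
  have pi: "p < i" using iS by (simp add: S_def)
  have len: "length xs = Suc i - p" using pi by (simp add: xs_def)
  have nth: "xs ! t = g (p + t)" if "t < Suc i - p" for t using that by (simp add: xs_def del: upt_Suc)
  have "walk V (Redges V E r n) xs" unfolding walk_def
  proof (intro conjI allI impI)
    show "xs \<noteq> []" using pi by (simp add: xs_def)
    show "set xs \<subseteq> V" using gV by (auto simp: xs_def)
  next
    fix t assume t: "Suc t < length xs"
    have e: "{g (p+t), g (Suc (p+t))} \<in> E" using adj by blast
    have "gdist V E r (g (p+t)) > n" using t len by (intro below) auto
    then show "{xs ! t, xs ! Suc t} \<in> Redges V E r n" using e t len nth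
      by (auto simp: Redges_def)
  qed
  moreover have "hd xs = g p" using pi by (simp add: xs_def upt_rec)
  moreover have "last xs = g i" using pi by (simp add: xs_def)
  ultimately show ?thesis using lev pi iS unfolding connected_in_def S_def by blast
qed


theorem mainTheorem4:
  fixes V :: "'a set" and E :: "'a set set" and k :: nat
  assumes "simple_graph V E" and "connected_graph V E"
    and "\<exists>cs. k_supported V E k cs"
  shows "int (Wgraph V E) \<ge> int k - 4"
proof -
  note sg = assms(1) and conn = assms(2)
  obtain cs where ks: "k_supported V E k cs" using assms(3) by blast
  define m where "m = length cs"
  obtain a b c where cyc: "is_cycle V E cs" and abc: "a < b" "b < c" "c < m"
    and H: "\<forall>u1\<in>{cs ! i | i. a \<le> i \<and> i \<le> b}. \<forall>u2\<in>{cs ! i | i. b \<le> i \<and> i \<le> c}.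
            \<forall>u3\<in>{cs ! i | i. c \<le> i \<and> i < m} \<union> {cs ! i | i. i \<le> a}.
             gdist V E u1 u2 \<ge> k \<or> gdist V E u2 u3 \<ge> k \<or> gdist V E u1 u3 \<ge> k"
    using ks unfolding k_supported_def Let_def m_def by blast
  have dist: "distinct cs" and csV: "\<And>i. i < m \<Longrightarrow> cs ! i \<in> V"
    using cyc unfolding is_cycle_def m_def by (auto simp: subset_iff)
  have m0: "0 < m" using abc by simp
  define g where "g i = cs ! (i mod m)" for i
  have gV: "\<forall>i. g i \<in> V" using csV m0 by (simp add: g_def)
  have adj: "\<forall>i. {g i, g (Suc i)} \<in> E"
  proof
    fix i
    have "{cs ! (i mod m), cs ! (Suc (i mod m) mod m)} \<in> E"
      using cyc m0 unfolding is_cycle_def m_def[symmetric] by simp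
    then show "{g i, g (Suc i)} \<in> E" by (simp add: g_def mod_Suc_eq)
  qed
  define r where "r = cs ! b"
  have rV: "r \<in> V" using csV abc by (simp add: r_def)
  define lv where "lv v = gdist V E r v" for v
  define I3 where "I3 = {cs ! i | i. c \<le> i \<and> i < m} \<union> {cs ! i | i. i \<le> a}"
  have I3V: "I3 \<subseteq> V" using csV abc by (auto simp: I3_def)
  have fI3: "finite I3" using I3V sg by (auto simp: simple_graph_def intro: finite_subset)
  have "cs ! c \<in> I3" using abc by (auto simp: I3_def)
  then have "Min (lv ` I3) \<in> lv ` I3" using fI3 by (intro Min_in) auto
  then obtain u3 where u3: "u3 \<in> I3" "lv u3 = Min (lv ` I3)" by auto
  have u3min: "lv u3 \<le> lv v" if "v \<in> I3" for v using u3 that fI3 by simp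
  have u3V: "u3 \<in> V" using u3 I3V by auto
  have u3r: "u3 \<noteq> r"
  proof
    assume "u3 = r"
    then obtain i where "cs ! i = cs ! b" "i < m" "i \<noteq> b" using u3 abc by (auto simp: I3_def r_def)
    then show False using dist abc nth_eq_iff_index_eq m_def by (metis less_trans)
  qed
  then have "lv u3 \<noteq> 0" using gdist_zero[OF conn rV u3V] by (auto simp: lv_def)
  then obtain n where n: "lv u3 = Suc n" by (cases "lv u3") auto
  have gI3: "g i \<in> I3" if "c \<le> i" "i \<le> m + a" for i
  proof (cases "i < m")
    case True then show ?thesis using that by (auto simp: g_def I3_def)
  next
    case False
    then have "i mod m = i - m" using that abc by (simp add: le_mod_geq)
    then show ?thesis using that False by (auto simp: g_def I3_def)
  qed
  obtain J where J: "c \<le> J" "J \<le> m + a" "g J = u3"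
  proof -
    from u3 obtain i where ui: "u3 = cs ! i" and ic: "(c \<le> i \<and> i < m) \<or> i \<le> a"
      by (auto simp: I3_def)
    from ic show ?thesis
    proof
      assume "c \<le> i \<and> i < m"
      then show ?thesis using that[of i] ui by (simp add: g_def)
    next
      assume "i \<le> a"
      then show ?thesis using that[of "i + m"] ui abc by (simp add: g_def)
    qed
  qed
  have gr: "g (m + b) = r" "g b = r" using abc by (simp_all add: g_def r_def)
  obtain i1 where i1: "J < i1" "i1 \<le> m + b" "lv (g i1) = n"
    and c1: "connected_in V (Redges V E r n) u3 (g i1)"
    using ivt_right[OF conn rV gV adj, of J "m + b" n] J n abc gr gdist_self[OF rV]
    unfolding lv_def by auto
  have "m + a < i1"
  proof (rule ccontr)
    assume "\<not> m + a < i1"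
    then have "g i1 \<in> I3" using J i1 by (intro gI3) auto
    then show False using u3min n i1 by fastforce
  qed
  define x where "x = g i1"
  have xI1: "x \<in> {cs ! i | i. a \<le> i \<and> i \<le> b}"
  proof -
    have "i1 mod m = i1 - m" using \<open>m + a < i1\<close> i1 abc by (simp add: le_mod_geq)
    then show ?thesis using \<open>m + a < i1\<close> i1 unfolding x_def g_def by auto
  qed
  obtain i2 where i2: "b \<le> i2" "i2 < J" "lv (g i2) = n"
    and c2: "connected_in V (Redges V E r n) (g i2) u3"
    using ivt_left[OF conn rV gV adj, of b J n] J n abc gr gdist_self[OF rV]
    unfolding lv_def by auto
  have "i2 < c"
  proof (rule ccontr)
    assume "\<not> i2 < c"
    then have "g i2 \<in> I3" using J i2 by (intro gI3) auto
    then show False using u3min n i2 by fastforce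
  qed
  define y where "y = g i2"
  have yI2: "y \<in> {cs ! i | i. b \<le> i \<and> i \<le> c}"
    using i2 \<open>i2 < c\<close> abc unfolding y_def g_def by auto
  obtain z where z: "z \<in> V" "{z, u3} \<in> E" "lv z = n"
    using level_pred[OF conn rV u3V] n unfolding lv_def by blast
  have c3: "connected_in V (Redges V E r n) z u3"
  proof -
    have "walk V (Redges V E r n) [z, u3]" using z u3V n
      by (auto simp: walk_Cons2 walk_single Redges_def lv_def)
    then show ?thesis unfolding connected_in_def by force
  qed
  have xV: "x \<in> V" "y \<in> V" using gV by (simp_all add: x_def y_def)
  have sxy: "simeq V E r n x y" unfolding simeq_def x_def y_def
    using conn_trans[OF conn_sym[OF c1] conn_sym[OF c2]] .
  have syz: "simeq V E r n y z" unfolding simeq_def y_def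
    using conn_trans[OF c2 conn_sym[OF c3]] .
  have sxz: "simeq V E r n x z" unfolding simeq_def x_def
    using conn_trans[OF conn_sym[OF c1] conn_sym[OF c3]] .
  define w where "w = Wgraph V E"
  have Ww: "Wroot V E r \<le> w" using Wgraph_ge[OF sg rV] by (simp add: w_def)
  have dxy: "gdist V E x y \<le> w"
    using Wroot_ge[OF sg xV(1) xV(2), of r n] sxy i1 i2 Ww unfolding lv_def x_def y_def by simp
  have dyz: "gdist V E y z \<le> w"
    using Wroot_ge[OF sg xV(2) z(1), of r n] syz z i2 Ww unfolding lv_def y_def by simp
  have dxz: "gdist V E x z \<le> w"
    using Wroot_ge[OF sg xV(1) z(1), of r n] sxz z i1 Ww unfolding lv_def x_def by simp
  have dzu: "gdist V E z u3 \<le> 1" using gdist_edge[OF z(2) z(1) u3V] .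
  have dyu: "gdist V E y u3 \<le> w + 1"
    using gdist_tri[OF conn xV(2) z(1) u3V] dyz dzu by linarith
  have dxu: "gdist V E x u3 \<le> w + 1"
    using gdist_tri[OF conn xV(1) z(1) u3V] dxz dzu by linarith
  have "gdist V E x y \<ge> k \<or> gdist V E y u3 \<ge> k \<or> gdist V E x u3 \<ge> k"
    using H xI1 yI2 u3 unfolding I3_def by blast
  then have "k \<le> w + 1" using dxy dyu dxu by linarith
  then show ?thesis by (simp add: w_def)
qed

end
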